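(* Let $q>1$, $p=\frac{q}{q-1}$, and assume Hypothesis (H$_q$). Then for all $x\in[a,b]$, $\lambda\in[0,1]$ and $\theta>0$, $$\big|S_f(mx,\lambda,\theta,ma,mb)\big|\le\frac{m^\theta A_4(\theta,\lambda,p)^{\frac1p}}{b-a}\Big\{(x-a)^{\theta+1}\Big(\frac{|f'(mx)|^q+\alpha m|f'(a)|^q}{\alpha+1}\Big)^{\frac1q}+(b-x)^{\theta+1}\Big(\frac{|f'(mx)|^q+\alpha m|f'(b)|^q}{\alpha+1}\Big)^{\frac1q}\Big\}.$$
   Context: Let $\Gamma$ denote Euler's Gamma function. Given $m\in(0,1]$, $a<b$, $x\in[a,b]$, $\lambda\in[0,1]$, $\theta>0$ and a function $f$ integrable on $[ma,mb]$, the Riemann–Liouville fractional integrals appearing below are $J^\theta_{(mx)^-}f(ma)=\frac{1}{\Gamma(\theta)}\int_{ma}^{mx}(s-ma)^{\theta-1}f(s)\,ds$ and $J^\theta_{(mx)^+}f(mb)=\frac{1}{\Gamma(\theta)}\int_{mx}^{mb}(mb-s)^{\theta-1}f(s)\,ds$ (each equal to $0$ if its interval of integration is degenerate), and $$S_f(mx,\lambda,\theta,ma,mb)=(1-\lambda)m^{\theta-1}\frac{(x-a)^\theta+(b-x)^\theta}{b-a}f(mx)+\lambda m^{\theta-1}\frac{(x-a)^\theta f(ma)+(b-x)^\theta f(mb)}{b-a}-\frac{\Gamma(\theta+1)}{m(b-a)}\Big[J^\theta_{(mx)^-}f(ma)+J^\theta_{(mx)^+}f(mb)\Big].$$ $(\alpha,m)$-convexity: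 for $(\alpha,m)\in[0,1]\times(0,1]$ and an interval $K\subseteq[0,\infty)$, a function $g:K\to\mathbb{R}$ is $(\alpha,m)$-convex on $K$ if $g(tX+m(1-t)Y)\le t^\alpha g(X)+m(1-t^\alpha)g(Y)$ for all $X,Y\in K$ and $t\in[0,1]$ with $tX+m(1-t)Y\in K$ (convention $0^0=1$). Hypothesis (H$_q$): $I\subseteq[0,\infty)$ is an interval, $f:I\to\mathbb{R}$ is differentiable on the interior $I^\circ$, $m\in(0,1]$, $\alpha\in[0,1]$, $a<b$ with $ma,b\in I^\circ$, $f'$ is Lebesgue integrable on $[ma,mb]$, and $|f'|^q$ is $(\alpha,m)$-convex on $[ma,b]$. $\beta(u,v)=\int_0^1t^{u-1}(1-t)^{v-1}dt$ ($u,v>0$) is the Beta function and ${}_2F_1(a',b';c';z)=\frac{1}{\beta(b',c'-b')}\int_0^1t^{b'-1}(1-t)^{c'-b'-1}(1-zt)^{-a'}dt$ ($c'>b'>0$, $|z|<1$) the hypergeometric function. For $\theta>0$, $p>1$: $A_4(\theta,\lambda,p)=\frac{1}{\theta p+1}$ if $\lambda=0$; $A_4(\theta,\lambda,p)=\frac{\lambda^{\frac{\theta p+1}{\theta}}}{\theta}\Big\{\beta\big(\tfrac1\theta,p+1\big)+\frac{(1-\lambda)^{p+1}}{p+1}\,{}_2F_1\big(\tfrac1\theta+p+1,\,p+1;\,p+2;\,1-\lambda\big)\Big\}$ if $0<\lambda<1$; $A_4(\theta,1,p)=\frac1\theta\beta\big(p+1,\tfrac1\theta\big)$. *)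

theory Defs
  imports "HOL-Analysis.Analysis"
begin

text \<open>Real power with the convention 0^0 = 1 (Isabelle's powr has 0 powr 0 = 0).\<close>
definition cpow :: "real \<Rightarrow> real \<Rightarrow> real" where
  "cpow t e = (if e = 0 then 1 else t powr e)"

definition alpha_m_convex_on :: "real \<Rightarrow> real \<Rightarrow> real set \<Rightarrow> (real \<Rightarrow> real) \<Rightarrow> bool" where
  "alpha_m_convex_on \<alpha> m K g \<longleftrightarrow>
     (\<forall>X\<in>K. \<forall>Y\<in>K. \<forall>t\<in>{0..1}. t * X + m * (1 - t) * Y \<in> K \<longrightarrow>
        g (t * X + m * (1 - t) * Y) \<le> cpow t \<alpha> * g X + m * (1 - cpow t \<alpha>) * g Y)"

text \<open>Left-sided RL integral  J^theta_{(mx)^-} f(ma) = 1/Gamma(theta) int_{ma}^{mx} (s-ma)^{theta-1} f(s) ds,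
  written with lower point u = ma and upper point v = mx.\<close>
definition RL_left :: "real \<Rightarrow> (real \<Rightarrow> real) \<Rightarrow> real \<Rightarrow> real \<Rightarrow> real" where
  "RL_left \<theta> f u v = integral {u..v} (\<lambda>s. (s - u) powr (\<theta> - 1) * f s) / Gamma \<theta>"

text \<open>Right-sided RL integral  J^theta_{(mx)^+} f(mb) = 1/Gamma(theta) int_{mx}^{mb} (mb-s)^{theta-1} f(s) ds,
  written with lower point u = mx and upper point v = mb.\<close>
definition RL_right :: "real \<Rightarrow> (real \<Rightarrow> real) \<Rightarrow> real \<Rightarrow> real \<Rightarrow> real" where
  "RL_right \<theta> f u v = integral {u..v} (\<lambda>s. (v - s) powr (\<theta> - 1) * f s) / Gamma \<theta>"

definition S_f :: "(real \<Rightarrow> real) \<Rightarrow> real \<Rightarrow> real \<Rightarrow> real \<Rightarrow> real \<Rightarrow> real \<Rightarrow> real \<Rightarrow> real" where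
  "S_f f m x lam \<theta> a b =
     (1 - lam) * m powr (\<theta> - 1) * (((x - a) powr \<theta> + (b - x) powr \<theta>) / (b - a)) * f (m * x)
     + lam * m powr (\<theta> - 1) * (((x - a) powr \<theta> * f (m * a) + (b - x) powr \<theta> * f (m * b)) / (b - a))
     - Gamma (\<theta> + 1) / (m * (b - a)) * (RL_left \<theta> f (m * a) (m * x) + RL_right \<theta> f (m * x) (m * b))"

text \<open>Gauss hypergeometric function via its Euler integral representation (c' > b' > 0, |z| < 1).\<close>
definition hyp2F1 :: "real \<Rightarrow> real \<Rightarrow> real \<Rightarrow> real \<Rightarrow> real" where
  "hyp2F1 a' b' c' z =
     integral {0..1} (\<lambda>t. t powr (b' - 1) * (1 - t) powr (c' - b' - 1) * (1 - z * t) powr (- a'))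
       / Beta b' (c' - b')"

definition A4 :: "real \<Rightarrow> real \<Rightarrow> real \<Rightarrow> real" where
  "A4 \<theta> lam p =
    (if lam = 0 then 1 / (\<theta> * p + 1)
     else if lam = 1 then Beta (p + 1) (1 / \<theta>) / \<theta>
     else lam powr ((\<theta> * p + 1) / \<theta>) / \<theta> *
       (Beta (1 / \<theta>) (p + 1)
        + (1 - lam) powr (p + 1) / (p + 1) * hyp2F1 (1 / \<theta> + p + 1) (p + 1) (p + 2) (1 - lam)))"

end

theory Submission
  imports Defs
begin


lemma subst_wrap:
  fixes f g g' :: "real \<Rightarrow> real"
  assumes s: "finite s" and le: "a \<le> b"
      and subset: "g ` {a..b} \<subseteq> {c..d}"
      and f: "continuous_on {c..d} f"
      and g: "continuous_on {a..b} g"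
      and deriv: "\<And>x. x \<in> {a..b} - s \<Longrightarrow> (g has_real_derivative g' x) (at x)"
      and mono: "g a \<le> g b"
      and K: "((\<lambda>x. g' x * f (g x)) has_integral K) {a..b}"
  shows "(f has_integral K) {g a..g b}"
proof -
  have "((\<lambda>x. g' x *\<^sub>R f (g x)) has_integral (integral {g a..g b} f - integral {g b..g a} f)) {a..b}"
    by (rule has_integral_substitution_general[OF s le subset f g])
       (use deriv in \<open>auto intro: has_field_derivative_at_within\<close>)
  moreover have "integral {g b..g a} f = 0"
    using mono by (cases "g a = g b") auto
  ultimately have "((\<lambda>x. g' x * f (g x)) has_integral integral {g a..g b} f) {a..b}" by simp
  hence "K = integral {g a..g b} f" using K has_integral_unique by blast
  moreover have "f integrable_on {g a..g b}"
  proof -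
    have "g a \<in> {c..d}" "g b \<in> {c..d}" using subset le by (auto simp: image_subset_iff)
    hence "{g a..g b} \<subseteq> {c..d}" by auto
    thus ?thesis using f integrable_continuous_real continuous_on_subset by blast
  qed
  ultimately show ?thesis by (simp add: has_integral_integral)
qed

lemma piece1:
  fixes \<theta> p lam :: real
  assumes th: "\<theta> > 0" and p: "p > 0" and l0: "0 < lam" and l1: "lam \<le> 1"
  shows "((\<lambda>t. (lam - t powr \<theta>) powr p) has_integral
           lam powr (p + 1/\<theta>) / \<theta> * Beta (1/\<theta>) (p+1)) {0..lam powr (1/\<theta>)}"
proof -
  define g where "g u = (lam*u) powr (1/\<theta>)" for u
  define g' where "g' u = (1/\<theta>) * (lam*u) powr (1/\<theta> - 1) * lam" for u
  define f where "f t = (lam - t powr \<theta>) powr p" for t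
  have g0: "g 0 = 0" and g1: "g 1 = lam powr (1/\<theta>)" by (auto simp: g_def)
  have gpow: "g u powr \<theta> = lam * u" if "u \<ge> 0" for u
    using that l0 th by (simp add: g_def powr_powr)
  have "(f has_integral lam powr (p + 1/\<theta>) / \<theta> * Beta (1/\<theta>) (p+1)) {g 0..g 1}"
  proof (rule subst_wrap[where g=g and a=0 and b=1 and s="{0}" and c=0 and d="lam powr (1/\<theta>)" and g'=g'])
    show "g ` {0..1} \<subseteq> {0..lam powr (1 / \<theta>)}"
    proof
      fix y assume "y \<in> g ` {0..1}"
      then obtain u where u: "u \<in> {0..1}" "y = g u" by auto
      have "(lam*u) powr (1/\<theta>) \<le> lam powr (1/\<theta>)"
        using u l0 th by (intro powr_mono2) (auto simp: mult_left_le)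
      thus "y \<in> {0..lam powr (1 / \<theta>)}" using u by (auto simp: g_def)
    qed
    show "continuous_on {0..lam powr (1 / \<theta>)} f"
      unfolding f_def
    proof (intro continuous_on_powr' continuous_intros ballI conjI impI)
      fix t assume t: "t \<in> {0..lam powr (1 / \<theta>)}"
      have "t powr \<theta> \<le> (lam powr (1/\<theta>)) powr \<theta>"
        using t th by (intro powr_mono2) auto
      also have "\<dots> = lam" using th l0 by (simp add: powr_powr)
      finally show "0 \<le> lam - t powr \<theta>" by simp
    qed (use th p in auto)
    show "continuous_on {0..1} g"
      unfolding g_def using th l0
      by (intro continuous_on_powr' continuous_intros) auto
    show "(g has_real_derivative g' x) (at x)" if "x \<in> {0..1} - {0}" for x
    proof -
      have "x > 0" using that by auto
      hence "lam * x > 0" using l0 by simp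
      have "((\<lambda>u. lam * u) has_real_derivative lam) (at x)"
        by (auto intro!: derivative_eq_intros)
      from DERIV_fun_powr[OF this \<open>lam*x>0\<close>, of "1/\<theta>"]
      show ?thesis unfolding g_def g'_def by simp
    qed
    show "g 0 \<le> g 1" by (simp add: g_def)
    have B: "((\<lambda>t. t powr (1/\<theta> - 1) * (1 - t) powr (p + 1 - 1)) has_integral Beta (1/\<theta>) (p+1)) {0..1}"
      using has_integral_Beta_real[of "1/\<theta>" "p+1"] th p by simp
    have B2: "((\<lambda>t. lam powr (p + 1/\<theta>) / \<theta> * (t powr (1/\<theta> - 1) * (1 - t) powr (p + 1 - 1)))
        has_integral lam powr (p + 1/\<theta>) / \<theta> * Beta (1/\<theta>) (p+1)) {0..1}"
      by (rule has_integral_mult_right[OF B])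
    show "((\<lambda>x. g' x * f (g x)) has_integral lam powr (p + 1/\<theta>) / \<theta> * Beta (1/\<theta>) (p+1)) {0..1}"
    proof (rule has_integral_spike_finite[OF _ _ B2, of "{0,1}"])
      fix u :: real assume u: "u \<in> {0..1} - {0,1}"
      hence u0: "u > 0" "u < 1" by auto
      have "f (g u) = (lam * (1 - u)) powr p" unfolding f_def using gpow[of u] u0
        by (simp add: algebra_simps)
      also have "\<dots> = lam powr p * (1-u) powr p" using u0 l0 by (simp add: powr_mult)
      finally have fg: "f (g u) = lam powr p * (1-u) powr p" .
      have "g' u = (1/\<theta>) * (lam powr (1/\<theta> - 1) * u powr (1/\<theta> - 1)) * lam"
        unfolding g'_def using u0 l0 by (simp add: powr_mult)
      also have "\<dots> = (1/\<theta>) * lam powr (1/\<theta>) * u powr (1/\<theta> - 1)"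
        using l0 by (simp add: powr_diff field_simps)
      finally have "g' u * f (g u) = (1/\<theta>) * (lam powr (1/\<theta>) * lam powr p) * (u powr (1/\<theta> - 1) * (1-u) powr p)"
        using fg by simp
      also have "lam powr (1/\<theta>) * lam powr p = lam powr (p + 1/\<theta>)"
        by (simp add: powr_add[symmetric] add.commute)
      finally show "g' u * f (g u) = lam powr (p + 1/\<theta>) / \<theta> * (u powr (1/\<theta> - 1) * (1 - u) powr (p + 1 - 1))"
        by simp
    qed simp
  qed auto
  thus ?thesis unfolding f_def g0 g1 .
qed

lemma piece2:
  fixes \<theta> p lam :: real
  assumes th: "\<theta> > 0" and p: "p > 0" and l0: "0 < lam" and l1: "lam < 1"
  shows "((\<lambda>t. (t powr \<theta> - lam) powr p) has_integral
           lam powr (p + 1/\<theta>) / \<theta> * (1 - lam) powr (p + 1) *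
           integral {0..1} (\<lambda>s. s powr p * (1 - (1 - lam) * s) powr (- (1/\<theta> + p + 1))))
           {lam powr (1/\<theta>)..1}"
proof -
  define z where "z = 1 - lam"
  have z0: "z > 0" and z1: "z < 1" using l0 l1 by (auto simp: z_def)
  define C where "C = lam powr (p + 1/\<theta>) / \<theta> * z powr (p + 1)"
  define k where "k s = s powr p * (1 - z * s) powr (- (1/\<theta> + p + 1))" for s
  have w_ge: "1 - z * s \<ge> lam" if "s \<in> {0..1}" for s
    using that l1 mult_nonneg_nonneg[of "1-lam" "1-s"] by (auto simp: z_def algebra_simps)
  have w_le: "1 - z * s \<le> 1" if "s \<in> {0..1}" for s
    using that z0 by auto
  define h where "h s = lam / (1 - z * s)" for s
  define g where "g s = h s powr (1/\<theta>)" for s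
  define g' where "g' s = (1/\<theta>) * h s powr (1/\<theta> - 1) * (lam * z / ((1 - z * s) * (1 - z * s)))" for s
  define f where "f t = (t powr \<theta> - lam) powr p" for t
  have h_pos: "h s > 0" and h_ge: "h s \<ge> lam" and h_le: "h s \<le> 1" if "s \<in> {0..1}" for s
  proof -
    have "1 - z * s > 0" using w_ge[OF that] l0 by linarith
    thus "h s > 0" using l0 by (simp add: h_def)
    show "h s \<ge> lam" unfolding h_def using w_ge[OF that] w_le[OF that] l0 \<open>1 - z * s > 0\<close>
      by (simp add: field_simps mult_left_le)
    show "h s \<le> 1" unfolding h_def using w_ge[OF that] \<open>1 - z * s > 0\<close> by simp
  qed
  have g0: "g 0 = lam powr (1/\<theta>)" and g1: "g 1 = 1" using l0 by (auto simp: g_def h_def z_def)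
  have wpos: "\<forall>s\<in>{0..1}. 1 - z * s > 0" using w_ge l0 by force
  have kint: "k integrable_on {0..1}"
    unfolding k_def
    by (intro integrable_continuous_real continuous_on_powr' continuous_intros ballI conjI impI)
       (use p wpos in force)+
  have "(f has_integral C * integral {0..1} k) {g 0..g 1}"
  proof (rule subst_wrap[where g=g and a=0 and b=1 and s="{}" and c="lam powr (1/\<theta>)" and d=1 and g'=g'])
    show "g ` {0..1} \<subseteq> {lam powr (1/\<theta>)..1}"
    proof
      fix y assume "y \<in> g ` {0..1}"
      then obtain u where u: "u \<in> {0..1}" "y = g u" by auto
      have "lam powr (1/\<theta>) \<le> h u powr (1/\<theta>)"
        using u l0 th h_ge by (intro powr_mono2) auto
      moreover have "h u powr (1/\<theta>) \<le> 1 powr (1/\<theta>)"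
        using u l0 th h_le h_pos[of u] by (intro powr_mono2) auto
      ultimately show "y \<in> {lam powr (1 / \<theta>)..1}" using u by (auto simp: g_def)
    qed
    show "continuous_on {lam powr (1 / \<theta>)..1} f"
      unfolding f_def
    proof (intro continuous_on_powr' continuous_intros ballI conjI impI)
      fix t assume t: "t \<in> {lam powr (1 / \<theta>)..1}"
      have "(lam powr (1/\<theta>)) powr \<theta> \<le> t powr \<theta>"
        using t th by (intro powr_mono2) auto
      also have "(lam powr (1/\<theta>)) powr \<theta> = lam" using th l0 by (simp add: powr_powr)
      finally show "0 \<le> t powr \<theta> - lam" by simp
      show "0 \<le> t" using t l0 by (meson atLeastAtMost_iff order_trans powr_ge_zero)
    qed (use th p in auto)
    have hcont: "continuous_on {0..1} h"
      unfolding h_def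
    proof (intro continuous_intros ballI)
      fix s :: real assume "s \<in> {0..1}" thus "1 - z * s \<noteq> 0" using w_ge[of s] l0 by auto
    qed
    show "continuous_on {0..1} g"
      unfolding g_def using th h_pos h_pos[THEN less_imp_le]
      by (intro continuous_on_powr' continuous_intros hcont) auto
    show "(g has_real_derivative g' x) (at x)" if "x \<in> {0..1} - {}" for x
    proof -
      have w: "1 - z * x > 0" using w_ge[of x] l0 that by auto
      have hd: "(h has_real_derivative lam * z / ((1 - z * x) * (1 - z * x))) (at x)"
        unfolding h_def using w
        by (auto intro!: derivative_eq_intros simp: field_simps power2_eq_square)
      from DERIV_fun_powr[OF hd h_pos[of x], of "1/\<theta>"] that
      show ?thesis unfolding g_def g'_def by (simp add: mult.assoc)
    qed
    show "g 0 \<le> g 1" using g0 g1 th l0 l1 by (simp add: powr_le1)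
    have K2: "((\<lambda>s. C * k s) has_integral C * integral {0..1} k) {0..1}"
      by (rule has_integral_mult_right[OF integrable_integral[OF kint]])
    show "((\<lambda>x. g' x * f (g x)) has_integral C * integral {0..1} k) {0..1}"
    proof (rule has_integral_spike_finite[OF _ _ K2, of "{0,1}"])
      fix s :: real assume u: "s \<in> {0..1} - {0,1}"
      hence s0: "s > 0" "s < 1" by auto
      define w where "w = 1 - z * s"
      have w: "w > 0" using w_ge[of s] l0 s0 by (auto simp: w_def)
      have hs: "h s = lam / w" by (simp add: h_def w_def)
      have "g s powr \<theta> = h s" using h_pos[of s] s0 th by (simp add: g_def powr_powr)
      hence "f (g s) = (lam / w - lam) powr p" by (simp add: f_def hs)
      also have "lam / w - lam = lam * z * s / w" using w by (simp add: w_def field_simps)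
      also have "(lam * z * s / w) powr p = lam powr p * z powr p * s powr p / w powr p"
        using l0 z0 s0 w by (simp add: powr_mult powr_divide)
      finally have fg: "f (g s) = lam powr p * z powr p * s powr p / w powr p" .
      have g's: "g' s = (1/\<theta>) * (lam powr (1/\<theta> - 1) / w powr (1/\<theta> - 1)) * (lam * z / (w * w))"
        unfolding g'_def hs using l0 w by (simp add: powr_divide w_def)
      have e1: "lam powr (p + 1/\<theta>) = lam powr p * lam powr (1/\<theta> - 1) * lam"
      proof -
        have "lam powr (p + 1/\<theta>) = lam powr ((p + (1/\<theta> - 1)) + 1)" by simp
        also have "\<dots> = lam powr p * lam powr (1/\<theta> - 1) * lam powr 1" by (simp only: powr_add)
        finally show ?thesis using l0 by simp
      qed
      have e2: "z powr (p + 1) = z powr p * z" using z0 by (simp add: powr_add)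
      have e3: "w powr (- (1/\<theta> + p + 1)) = 1 / (w powr p * w powr (1/\<theta> - 1) * (w * w))"
      proof -
        have "w powr (p + (1/\<theta> - 1) + 2) = w powr p * w powr (1/\<theta> - 1) * w powr 2"
          by (simp only: powr_add)
        also have "w powr 2 = w * w" using w by (simp add: powr_numeral power2_eq_square)
        finally have P: "w powr (p + (1/\<theta> - 1) + 2) = w powr p * w powr (1/\<theta> - 1) * (w * w)" .
        have "w powr (- (1/\<theta> + p + 1)) = w powr (- (p + (1/\<theta> - 1) + 2))" by (rule arg_cong[where f="\<lambda>e. w powr e"]) simp
        also have "\<dots> = inverse (w powr (p + (1/\<theta> - 1) + 2))" by (rule powr_minus)
        finally show ?thesis unfolding P by (simp add: divide_inverse)
      qed
      show "g' s * f (g s) = C * k s"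
      proof -
        have a1: "w powr p > 0" "w powr (1/\<theta> - 1) > 0" using w by auto
        define A where "A = w powr p"
        define B where "B = w powr (1/\<theta> - 1)"
        have "A \<noteq> 0" "B \<noteq> 0" "w \<noteq> 0" "\<theta> \<noteq> 0" using a1 w th by (auto simp: A_def B_def)
        thus ?thesis unfolding C_def k_def g's fg e1 e2 w_def[symmetric] e3 A_def[symmetric] B_def[symmetric]
          by (simp add: divide_simps)
      qed
    qed simp
  qed auto
  thus ?thesis unfolding f_def g0 g1 C_def k_def z_def .
qed

lemma Beta_p1_1:
  fixes p :: real assumes "p > 0" shows "Beta (p + 1) 1 = 1 / (p + 1)"
proof -
  have "p + 1 \<notin> \<int>\<^sub>\<le>\<^sub>0" using assms nonpos_Ints_nonpos by fastforce
  hence "Gamma (p + 1 + 1) = (p+1) * Gamma (p+1)" by (rule Gamma_plus1)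
  moreover have "Gamma (p+1) > 0" using assms by simp
  ultimately show ?thesis unfolding Beta_def by (simp add: add.assoc)
qed

lemma A4_integral:
  fixes \<theta> p lam :: real
  assumes th: "\<theta> > 0" and p: "p > 0" and l0: "0 \<le> lam" and l1: "lam \<le> 1"
  shows "((\<lambda>t. \<bar>lam - t powr \<theta>\<bar> powr p) has_integral A4 \<theta> lam p) {0..1}"
proof -
  consider "lam = 0" | "lam = 1" | "0 < lam" "lam < 1" using l0 l1 by force
  then show ?thesis
  proof cases
    case 1
    have "((\<lambda>t. t powr (\<theta> * p)) has_integral (1 powr (\<theta>*p + 1) / (\<theta>*p + 1))) {0..1}"
      using th p by (intro has_integral_powr_from_0) (auto intro: add_nonneg_pos less_le_trans[of "-1" 0] simp: zero_le_mult_iff)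
    hence "((\<lambda>t. t powr (\<theta> * p)) has_integral A4 \<theta> lam p) {0..1}"
      using 1 by (simp add: A4_def)
    thus ?thesis
      by (rule has_integral_eq[rotated]) (use 1 in \<open>auto simp: powr_powr\<close>)
  next
    case 2
    have "((\<lambda>t. (1 - t powr \<theta>) powr p) has_integral
           1 powr (p + 1/\<theta>) / \<theta> * Beta (1/\<theta>) (p+1)) {0..1 powr (1/\<theta>)}"
      using piece1[OF th p, of 1] by simp
    hence "((\<lambda>t. (1 - t powr \<theta>) powr p) has_integral A4 \<theta> lam p) {0..1}"
      using 2 by (simp add: A4_def Beta_commute)
    thus ?thesis
    proof (rule has_integral_eq[rotated])
      fix t :: real assume "t \<in> {0..1}"
      hence "t powr \<theta> \<le> 1" using th by (simp add: powr_le1)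
      thus "(1 - t powr \<theta>) powr p = \<bar>lam - t powr \<theta>\<bar> powr p" using 2 by simp
    qed
  next
    case 3
    define c where "c = lam powr (1/\<theta>)"
    have c0: "0 \<le> c" and c1: "c \<le> 1" using 3 th by (auto simp: c_def powr_le1)
    have cth: "c powr \<theta> = lam" using 3 th by (simp add: c_def powr_powr)
    have P1: "((\<lambda>t. \<bar>lam - t powr \<theta>\<bar> powr p) has_integral
           lam powr (p + 1/\<theta>) / \<theta> * Beta (1/\<theta>) (p+1)) {0..c}"
    proof (rule has_integral_eq[rotated])
      show "((\<lambda>t. (lam - t powr \<theta>) powr p) has_integral
           lam powr (p + 1/\<theta>) / \<theta> * Beta (1/\<theta>) (p+1)) {0..c}"
        unfolding c_def using piece1[OF th p, of lam] 3 by simp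
      fix t :: real assume "t \<in> {0..c}"
      hence "t powr \<theta> \<le> c powr \<theta>" using th by (intro powr_mono2) auto
      thus "(lam - t powr \<theta>) powr p = \<bar>lam - t powr \<theta>\<bar> powr p" using cth by simp
    qed
    define K where "K = integral {0..1} (\<lambda>s. s powr p * (1 - (1 - lam) * s) powr (- (1/\<theta> + p + 1)))"
    have P2: "((\<lambda>t. \<bar>lam - t powr \<theta>\<bar> powr p) has_integral
           lam powr (p + 1/\<theta>) / \<theta> * (1 - lam) powr (p + 1) * K) {c..1}"
    proof (rule has_integral_eq[rotated])
      show "((\<lambda>t. (t powr \<theta> - lam) powr p) has_integral
           lam powr (p + 1/\<theta>) / \<theta> * (1 - lam) powr (p + 1) * K) {c..1}"
        unfolding c_def K_def using piece2[OF th p, of lam] 3 by simp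
      fix t :: real assume "t \<in> {c..1}"
      hence "c powr \<theta> \<le> t powr \<theta>" using th c0 by (intro powr_mono2) auto
      thus "(t powr \<theta> - lam) powr p = \<bar>lam - t powr \<theta>\<bar> powr p" using cth by simp
    qed
    have H: "hyp2F1 (1 / \<theta> + p + 1) (p + 1) (p + 2) (1 - lam) = (p + 1) * K"
    proof -
      have "integral {0..1} (\<lambda>t. t powr (p + 1 - 1) * (1 - t) powr (p + 2 - (p + 1) - 1) *
              (1 - (1 - lam) * t) powr (- (1 / \<theta> + p + 1))) = K"
        unfolding K_def by (rule integral_spike[of "{1}"]) auto
      thus ?thesis unfolding hyp2F1_def using Beta_p1_1[OF p] p
        by (simp add: add.commute[of p 2] add.commute[of 1 p])
    qed
    have "((\<lambda>t. \<bar>lam - t powr \<theta>\<bar> powr p) has_integral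
           lam powr (p + 1/\<theta>) / \<theta> * Beta (1/\<theta>) (p+1) +
           lam powr (p + 1/\<theta>) / \<theta> * (1 - lam) powr (p + 1) * K) {0..1}"
      by (rule has_integral_combine[OF c0 c1 P1 P2])
    moreover have "(\<theta> * p + 1) / \<theta> = p + 1/\<theta>" using th by (simp add: field_simps)
    moreover have "A4 \<theta> lam p = lam powr (p + 1/\<theta>) / \<theta> * Beta (1/\<theta>) (p+1) +
           lam powr (p + 1/\<theta>) / \<theta> * (1 - lam) powr (p + 1) * K"
    proof -
      have "A4 \<theta> lam p = lam powr (p + 1/\<theta>) / \<theta> * (Beta (1/\<theta>) (p+1) +
               (1 - lam) powr (p + 1) / (p + 1) * ((p + 1) * K))"
        unfolding A4_def H[symmetric] using 3 \<open>(\<theta> * p + 1) / \<theta> = p + 1/\<theta>\<close> by simp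
      also have "\<dots> = lam powr (p + 1/\<theta>) / \<theta> * Beta (1/\<theta>) (p+1) +
           lam powr (p + 1/\<theta>) / \<theta> * (1 - lam) powr (p + 1) * K"
      proof -
        have E: "(1 - lam) powr (p + 1) / (p + 1) * ((p + 1) * K) = (1 - lam) powr (p + 1) * K"
          using p by simp
        show ?thesis by (subst E) (simp add: distrib_left)
      qed
      finally show ?thesis .
    qed
    ultimately show ?thesis by simp
  qed
qed



lemma side_parts:
  fixes f f' :: "real \<Rightarrow> real" and P w \<theta> lam :: real
  assumes th: "\<theta> > 0" and w: "w \<noteq> 0"
    and der: "\<And>t. t \<in> {0..1} \<Longrightarrow> (f has_real_derivative f' (P + t * w)) (at (P + t * w))"
  shows "(\<lambda>t. t powr (\<theta> - 1) * f (P + t * w)) integrable_on {0..1}"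
    and "((\<lambda>t. (lam - t powr \<theta>) * f' (P + t * w)) has_integral
          (lam * (f (P + w) - f P) - f (P + w) + \<theta> * integral {0..1} (\<lambda>t. t powr (\<theta> - 1) * f (P + t * w))) / w) {0..1}"
proof -
  define F where "F = (\<lambda>t. f (P + t * w))"
  have Fd: "(F has_real_derivative w * f' (P + t * w)) (at t)" if "t \<in> {0..1}" for t
  proof -
    have "((\<lambda>t. P + t * w) has_real_derivative w) (at t)"
      by (auto intro!: derivative_eq_intros)
    from DERIV_chain2[OF der[OF that] this] show ?thesis
      unfolding F_def by (simp add: mult.commute)
  qed
  have Fc: "continuous_on {0..1} F"
    using Fd by (meson DERIV_continuous continuous_at_imp_continuous_on)
  define T where "T = (\<lambda>t. t powr (\<theta> - 1) * F t)"
  have Tint: "T integrable_on {0..1}"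
  proof -
    have "(\<lambda>t. F t * t powr (\<theta> - 1)) absolutely_integrable_on {0..1}"
    proof (rule absolutely_integrable_bounded_measurable_product_real)
      show "F \<in> borel_measurable (lebesgue_on {0..1})"
        by (rule continuous_imp_measurable_on_sets_lebesgue[OF Fc]) auto
      show "{0..1::real} \<in> sets lebesgue" by auto
      show "bounded (F ` {0..1})"
        by (rule compact_imp_bounded[OF compact_continuous_image[OF Fc]]) auto
      show "(\<lambda>t. t powr (\<theta> - 1)) absolutely_integrable_on {0..1::real}"
        by (rule nonnegative_absolutely_integrable_1[OF integrable_on_powr_from_0]) (use th in auto)
    qed
    thus ?thesis unfolding T_def absolutely_integrable_on_def by (simp add: mult.commute)
  qed
  thus "(\<lambda>t. t powr (\<theta> - 1) * f (P + t * w)) integrable_on {0..1}" by (simp add: T_def F_def)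
  define IT where "IT = integral {0..1} T"
  have d1: "((\<lambda>t. w * f' (P + t * w)) has_integral (F 1 - F 0)) {0..1}"
    by (rule fundamental_theorem_of_calculus)
       (use Fd in \<open>auto simp: has_real_derivative_iff_has_vector_derivative[symmetric] intro: has_field_derivative_at_within\<close>)
  define h where "h t = t powr \<theta> * F t" for t
  have d2: "((\<lambda>t. \<theta> * T t + t powr \<theta> * (w * f' (P + t * w))) has_integral (h 1 - h 0)) {0..1}"
  proof (rule fundamental_theorem_of_calculus_interior)
    show "continuous_on {0..1} h" unfolding h_def
      by (intro continuous_intros continuous_on_powr' Fc) (use th in auto)
    fix t :: real assume t: "t \<in> {0<..<1}"
    have "((\<lambda>t. t powr \<theta>) has_real_derivative \<theta> * t powr (\<theta> - 1)) (at t)"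
      using t by (intro has_real_derivative_powr) auto
    from DERIV_mult[OF this Fd] t
    have "(h has_real_derivative \<theta> * t powr (\<theta> - 1) * F t + t powr \<theta> * (w * f' (P + t * w))) (at t)"
      unfolding h_def by (auto simp: mult_ac)
    thus "(h has_vector_derivative \<theta> * T t + t powr \<theta> * (w * f' (P + t * w))) (at t)"
      by (simp add: has_real_derivative_iff_has_vector_derivative[symmetric] T_def mult.assoc)
  qed simp
  have h10: "h 1 - h 0 = F 1" by (simp add: h_def)
  have d3: "((\<lambda>t. \<theta> * T t) has_integral \<theta> * IT) {0..1}"
    unfolding IT_def by (rule has_integral_mult_right[OF integrable_integral[OF Tint]])
  have d4: "((\<lambda>t. t powr \<theta> * (w * f' (P + t * w))) has_integral (F 1 - \<theta> * IT)) {0..1}"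
    using has_integral_diff[OF d2 d3] unfolding h10 by simp
  have d5: "((\<lambda>t. lam * (w * f' (P + t * w)) - t powr \<theta> * (w * f' (P + t * w))) has_integral
        (lam * (F 1 - F 0) - (F 1 - \<theta> * IT))) {0..1}"
    by (rule has_integral_diff[OF has_integral_mult_right[OF d1] d4])
  have d6: "((\<lambda>t. (1/w) * (lam * (w * f' (P + t * w)) - t powr \<theta> * (w * f' (P + t * w)))) has_integral
        (1/w) * (lam * (F 1 - F 0) - (F 1 - \<theta> * IT))) {0..1}"
    by (rule has_integral_mult_right[OF d5])
  show "((\<lambda>t. (lam - t powr \<theta>) * f' (P + t * w)) has_integral
          (lam * (f (P + w) - f P) - f (P + w) + \<theta> * integral {0..1} (\<lambda>t. t powr (\<theta> - 1) * f (P + t * w))) / w) {0..1}"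
  proof (rule has_integral_eq[rotated])
    have EQ: "(1/w) * (lam * (F 1 - F 0) - (F 1 - \<theta> * IT)) =
      (lam * (f (P + w) - f P) - f (P + w) + \<theta> * integral {0..1} (\<lambda>t. t powr (\<theta> - 1) * f (P + t * w))) / w"
      unfolding F_def IT_def T_def by (simp add: field_simps)
    show "((\<lambda>t. (1/w) * (lam * (w * f' (P + t * w)) - t powr \<theta> * (w * f' (P + t * w)))) has_integral
          (lam * (f (P + w) - f P) - f (P + w) + \<theta> * integral {0..1} (\<lambda>t. t powr (\<theta> - 1) * f (P + t * w))) / w) {0..1}"
      by (subst EQ[symmetric]) (rule d6)
    fix t :: real
    show "(1/w) * (lam * (w * f' (P + t * w)) - t powr \<theta> * (w * f' (P + t * w))) = (lam - t powr \<theta>) * f' (P + t * w)"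
      using w by (simp add: field_simps)
  qed
qed

lemma rl_affine:
  fixes f :: "real \<Rightarrow> real" and P w \<theta> :: real
  assumes w: "w \<noteq> 0"
    and Tint: "(\<lambda>t. t powr (\<theta> - 1) * f (P + t * w)) integrable_on {0..1}"
  shows "((\<lambda>s. ((s - P) / w) powr (\<theta> - 1) * f s) has_integral
           \<bar>w\<bar> * integral {0..1} (\<lambda>t. t powr (\<theta> - 1) * f (P + t * w))) ((\<lambda>x. w * x + P) ` {0..1})"
proof -
  define T where "T = (\<lambda>t. t powr (\<theta> - 1) * f (P + t * w))"
  have "(T has_integral integral {0..1} T) (cbox 0 1)"
    using Tint unfolding T_def by (simp add: has_integral_integral)
  from has_integral_affinity[OF this, of "1/w" "- P / w"] w
  have "((\<lambda>x. T ((1/w) * x + - P / w)) has_integral \<bar>w\<bar> * integral {0..1} T)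
         ((\<lambda>x. w * x + P) ` {0..1})"
    by (simp add: divide_simps)
  moreover have "T ((1/w) * s + - P / w) = ((s - P) / w) powr (\<theta> - 1) * f s" for s
    unfolding T_def using w by (simp add: field_simps)
  ultimately show ?thesis unfolding T_def by simp
qed



lemma holder_bound:
  fixes \<phi> \<psi> C :: "real \<Rightarrow> real" and p q A B :: real
  assumes p: "p > 1" and q: "q > 1" and pq: "1/p + 1/q = 1"
    and prod: "(\<lambda>t. \<phi> t * \<psi> t) integrable_on {0..1}"
    and hA: "((\<lambda>t. \<bar>\<phi> t\<bar> powr p) has_integral A) {0..1}" and A: "A > 0"
    and hB: "(C has_integral B) {0..1}" and B: "B > 0"
    and le: "\<And>t. t \<in> {0..1} \<Longrightarrow> \<bar>\<psi> t\<bar> powr q \<le> C t"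
  shows "\<bar>integral {0..1} (\<lambda>t. \<phi> t * \<psi> t)\<bar> \<le> A powr (1/p) * B powr (1/q)"
proof -
  define a where "a = A powr (1/p)"
  define b where "b = B powr (1/q)"
  have a0: "a > 0" and b0: "b > 0" using A B by (auto simp: a_def b_def)
  have ap: "a powr p = A" using A p by (simp add: a_def powr_powr)
  have bq: "b powr q = B" using B q by (simp add: b_def powr_powr)
  define G where "G t = a * b * (\<bar>\<phi> t\<bar> powr p / (p * A) + C t / (q * B))" for t
  have hG: "(G has_integral a * b * (A / (p * A) + B / (q * B))) {0..1}"
    unfolding G_def
    by (intro has_integral_mult_right has_integral_add has_integral_divide hA hB)
  have "A / (p * A) + B / (q * B) = 1" using A B pq by simp
  hence hG': "(G has_integral a * b) {0..1}" using hG by simp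
  have "\<bar>integral {0..1} (\<lambda>t. \<phi> t * \<psi> t)\<bar> \<le> integral {0..1} G"
  proof -
    have "norm (integral {0..1} (\<lambda>t. \<phi> t * \<psi> t)) \<le> integral {0..1} G"
    proof (rule integral_norm_bound_integral[OF prod])
      show "G integrable_on {0..1}" using hG' by blast
      fix t :: real assume t: "t \<in> {0..1}"
      have "(\<bar>\<phi> t\<bar> / a) * (\<bar>\<psi> t\<bar> / b) \<le> (\<bar>\<phi> t\<bar> / a) powr p / p + (\<bar>\<psi> t\<bar> / b) powr q / q"
        by (rule Youngs_inequality) (use p q pq a0 b0 in auto)
      also have "(\<bar>\<phi> t\<bar> / a) powr p = \<bar>\<phi> t\<bar> powr p / A"
        using a0 by (simp add: powr_divide ap)
      also have "(\<bar>\<psi> t\<bar> / b) powr q = \<bar>\<psi> t\<bar> powr q / B"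
        using b0 by (simp add: powr_divide bq)
      also have "\<bar>\<psi> t\<bar> powr q / B / q \<le> C t / B / q"
        using le[OF t] B q by (simp add: divide_right_mono)
      finally have "(\<bar>\<phi> t\<bar> / a) * (\<bar>\<psi> t\<bar> / b) \<le> \<bar>\<phi> t\<bar> powr p / A / p + C t / B / q"
        by simp
      hence "a * b * ((\<bar>\<phi> t\<bar> / a) * (\<bar>\<psi> t\<bar> / b)) \<le> a * b * (\<bar>\<phi> t\<bar> powr p / A / p + C t / B / q)"
        using a0 b0 by (intro mult_left_mono) auto
      thus "norm (\<phi> t * \<psi> t) \<le> G t"
        using a0 b0 by (simp add: G_def abs_mult field_simps)
    qed
    thus ?thesis by simp
  qed
  also have "integral {0..1} G = a * b" using hG' by (rule integral_unique)
  finally show ?thesis by (simp add: a_def b_def)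
qed



lemma A4_pos:
  fixes \<theta> p lam :: real
  assumes th: "\<theta> > 0" and p: "p > 0" and l0: "0 \<le> lam" and l1: "lam \<le> 1"
  shows "A4 \<theta> lam p > 0"
proof -
  consider "lam = 0" | "lam = 1" | "0 < lam" "lam < 1" using l0 l1 by force
  then show ?thesis
  proof cases
    case 1 thus ?thesis using th p by (simp add: A4_def add_pos_pos)
  next
    case 2 thus ?thesis using th p by (simp add: A4_def Beta_def add_pos_pos)
  next
    case 3
    define K where "K = integral {0..1} (\<lambda>s. s powr p * (1 - (1 - lam) * s) powr (- (1/\<theta> + p + 1)))"
    have wpos: "\<forall>s\<in>{0..1::real}. 1 - (1 - lam) * s > 0"
    proof
      fix s :: real assume "s \<in> {0..1}"
      hence "(1 - lam) * s \<le> 1 - lam" using 3 by (simp add: mult_left_le)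
      thus "1 - (1 - lam) * s > 0" using 3 by linarith
    qed
    have K0: "K \<ge> 0" unfolding K_def
    proof (rule integral_nonneg)
      show "(\<lambda>s. s powr p * (1 - (1 - lam) * s) powr (- (1/\<theta> + p + 1))) integrable_on {0..1}"
        by (intro integrable_continuous_real continuous_on_powr' continuous_intros ballI conjI impI)
           (use p wpos in force)+
    qed auto
    have H: "hyp2F1 (1 / \<theta> + p + 1) (p + 1) (p + 2) (1 - lam) = (p + 1) * K"
    proof -
      have "integral {0..1} (\<lambda>t. t powr (p + 1 - 1) * (1 - t) powr (p + 2 - (p + 1) - 1) *
              (1 - (1 - lam) * t) powr (- (1 / \<theta> + p + 1))) = K"
        unfolding K_def by (rule integral_spike[of "{1}"]) auto
      thus ?thesis unfolding hyp2F1_def using Beta_p1_1[OF p] p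
        by (simp add: add.commute[of p 2] add.commute[of 1 p])
    qed
    have "Beta (1/\<theta>) (p+1) > 0" using th p by (simp add: Beta_def add_pos_pos)
    moreover have "(1 - lam) powr (p + 1) / (p + 1) * hyp2F1 (1 / \<theta> + p + 1) (p + 1) (p + 2) (1 - lam) \<ge> 0"
      unfolding H using K0 p by simp
    ultimately show ?thesis using 3 th unfolding A4_def by (simp add: add_pos_nonneg)
  qed
qed

lemma cpow_int:
  fixes \<alpha> :: real assumes "0 \<le> \<alpha>"
  shows "((\<lambda>t. cpow t \<alpha>) has_integral 1 / (\<alpha> + 1)) {0..1}"
proof (cases "\<alpha> = 0")
  case True
  thus ?thesis using has_integral_const_real[of "1::real" "0::real" 1] by (simp add: cpow_def)
next
  case False
  hence "((\<lambda>t. t powr \<alpha>) has_integral 1 powr (\<alpha> + 1) / (\<alpha> + 1)) {0..1}"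
    using assms by (intro has_integral_powr_from_0) auto
  thus ?thesis using False by (simp add: cpow_def)
qed

lemma C_int:
  fixes \<alpha> m M1 M2 :: real assumes "0 \<le> \<alpha>"
  shows "((\<lambda>t. cpow t \<alpha> * M1 + m * (1 - cpow t \<alpha>) * M2) has_integral (M1 + \<alpha> * m * M2) / (\<alpha> + 1)) {0..1}"
proof -
  have h1: "((\<lambda>t. cpow t \<alpha>) has_integral 1 / (\<alpha> + 1)) {0..1}" by (rule cpow_int[OF assms])
  have h2: "((\<lambda>t::real. 1::real) has_integral 1) {0..1}"
    using has_integral_const_real[of "1::real" "0::real" 1] by simp
  have "((\<lambda>t. cpow t \<alpha> * M1 + m * M2 * (1 - cpow t \<alpha>)) has_integral
          1 / (\<alpha> + 1) * M1 + m * M2 * (1 - 1 / (\<alpha> + 1))) {0..1}"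
    by (intro has_integral_add has_integral_mult_left has_integral_mult_right has_integral_diff h1 h2)
  moreover have "1 / (\<alpha> + 1) * M1 + m * M2 * (1 - 1 / (\<alpha> + 1)) = (M1 + \<alpha> * m * M2) / (\<alpha> + 1)"
  proof -
    have d: "\<alpha> + 1 > 0" using assms by simp
    have e: "1 - 1 / (\<alpha> + 1) = \<alpha> / (\<alpha> + 1)" using d by (simp add: field_simps)
    show ?thesis unfolding e using d by (simp add: add_divide_distrib)
  qed
  ultimately show ?thesis by (simp add: mult_ac)
qed



lemma side_bound:
  fixes f :: "real \<Rightarrow> real" and q p \<theta> lam \<alpha> m a b x Y :: real
  assumes q: "q > 1" and hp: "p = q / (q - 1)" and th: "\<theta> > 0"
    and l0: "0 \<le> lam" and l1: "lam \<le> 1" and a0: "0 \<le> \<alpha>" and a1: "\<alpha> \<le> 1"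
    and m0: "0 < m" and m1: "m \<le> 1" and ha: "0 \<le> a" and hxa: "a \<le> x" and hxb: "x \<le> b"
    and Ya: "a \<le> Y" and Yb: "Y \<le> b"
    and conv: "alpha_m_convex_on \<alpha> m {m * a..b} (\<lambda>s. \<bar>deriv f s\<bar> powr q)"
    and int: "(\<lambda>t. (lam - t powr \<theta>) * deriv f (t * (m * x) + m * (1 - t) * Y)) integrable_on {0..1}"
  shows "\<bar>integral {0..1} (\<lambda>t. (lam - t powr \<theta>) * deriv f (t * (m * x) + m * (1 - t) * Y))\<bar>
     \<le> A4 \<theta> lam p powr (1 / p) *
        ((\<bar>deriv f (m * x)\<bar> powr q + \<alpha> * m * \<bar>deriv f Y\<bar> powr q) / (\<alpha> + 1)) powr (1 / q)"
proof -
  define M1 where "M1 = \<bar>deriv f (m * x)\<bar> powr q"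
  define M2 where "M2 = \<bar>deriv f Y\<bar> powr q"
  define C where "C t = cpow t \<alpha> * M1 + m * (1 - cpow t \<alpha>) * M2" for t
  define B where "B = (M1 + \<alpha> * m * M2) / (\<alpha> + 1)"
  define \<psi> where "\<psi> t = deriv f (t * (m * x) + m * (1 - t) * Y)" for t
  have p1: "p > 1" using q by (simp add: hp)
  have pq: "1/p + 1/q = 1" using q by (simp add: hp field_simps)
  have le: "\<bar>\<psi> t\<bar> powr q \<le> C t" if t: "t \<in> {0..1}" for t
  proof -
    have x0: "0 \<le> x" using ha hxa by linarith
    have X: "m * x \<in> {m * a..b}"
    proof -
      have "m * a \<le> m * x" using m0 hxa by simp
      moreover have "m * x \<le> x" using mult_left_le_one_le[of x m] m0 m1 x0 by simp
      ultimately show ?thesis using hxb by simp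
    qed
    have Yin: "Y \<in> {m * a..b}"
    proof -
      have "m * a \<le> a" using mult_left_le_one_le[of a m] m0 m1 ha by simp
      thus ?thesis using Ya Yb by simp
    qed
    have t0: "0 \<le> t" "t \<le> 1" using t by auto
    have pt: "t * (m * x) + m * (1 - t) * Y \<in> {m * a..b}"
    proof -
      have "t * (m * a) \<le> t * (m * x)" using t0 m0 hxa by (intro mult_left_mono) auto
      moreover have "(1 - t) * (m * a) \<le> (1 - t) * (m * Y)" using t0 m0 Ya by (intro mult_left_mono) auto
      moreover have "m * x \<le> b" using X by simp
      hence "t * (m * x) \<le> t * b" using t0 by (intro mult_left_mono) auto
      moreover have "m * Y \<le> b" using mult_left_le_one_le[of Y m] Yb m0 m1 ha Ya by simp
      hence "(1 - t) * (m * Y) \<le> (1 - t) * b" using t0 by (intro mult_left_mono) auto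
      ultimately show ?thesis by (simp add: algebra_simps)
    qed
    from conv X Yin t pt show ?thesis
      unfolding alpha_m_convex_on_def \<psi>_def C_def M1_def M2_def by blast
  qed
  have M1nn: "M1 \<ge> 0" and M2nn: "M2 \<ge> 0" by (auto simp: M1_def M2_def)
  have RHSnn: "0 \<le> A4 \<theta> lam p powr (1 / p) * B powr (1 / q)" by simp
  have B0: "B \<ge> 0" using M1nn M2nn a0 m0 by (simp add: B_def)
  show ?thesis
  proof (cases "B = 0")
    case True
    hence "M1 + \<alpha> * m * M2 = 0" using a0 by (simp add: B_def)
    hence M10: "M1 = 0" and M20: "\<alpha> * m * M2 = 0" using M1nn M2nn a0 m0
      by (smt (verit) mult_nonneg_nonneg)+
    have C0: "C t = 0" for t
    proof (cases "\<alpha> = 0")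
      case True thus ?thesis by (simp add: C_def cpow_def M10)
    next
      case False hence "M2 = 0" using M20 m0 by simp
      thus ?thesis by (simp add: C_def M10)
    qed
    have "\<psi> t = 0" if "t \<in> {0..1}" for t
      using le[OF that] C0[of t] by (metis abs_eq_0 order_antisym powr_eq_0_iff powr_ge_zero)
    hence "integral {0..1} (\<lambda>t. (lam - t powr \<theta>) * \<psi> t) = integral {0..1} (\<lambda>t::real. 0::real)"
      by (intro Henstock_Kurzweil_Integration.integral_cong) auto
    hence "integral {0..1} (\<lambda>t. (lam - t powr \<theta>) * \<psi> t) = 0" by simp
    thus ?thesis using RHSnn by (simp add: \<psi>_def B_def M1_def M2_def)
  next
    case False
    hence Bp: "B > 0" using B0 by simp
    have "\<bar>integral {0..1} (\<lambda>t. (lam - t powr \<theta>) * \<psi> t)\<bar> \<le> A4 \<theta> lam p powr (1/p) * B powr (1/q)"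
    proof (rule holder_bound[OF p1 q pq])
      show "(\<lambda>t. (lam - t powr \<theta>) * \<psi> t) integrable_on {0..1}" using int by (simp add: \<psi>_def)
      show "((\<lambda>t. \<bar>lam - t powr \<theta>\<bar> powr p) has_integral A4 \<theta> lam p) {0..1}"
        using A4_integral[OF th _ l0 l1] p1 by simp
      show "A4 \<theta> lam p > 0" using A4_pos[OF th _ l0 l1] p1 by simp
      show "(C has_integral B) {0..1}" unfolding B_def C_def using C_int[OF a0] by simp
    qed (use le Bp in auto)
    thus ?thesis by (simp add: \<psi>_def B_def M1_def M2_def)
  qed
qed



lemma Gamma_succ: "\<theta> > 0 \<Longrightarrow> Gamma (\<theta> + 1) = \<theta> * Gamma (\<theta>::real)"
  by (rule Gamma_plus1) (use nonpos_Ints_nonpos in fastforce)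

lemma left_part:
  fixes f :: "real \<Rightarrow> real" and \<theta> m a x lam :: real
  assumes th: "\<theta> > 0" and m0: "m > 0" and hxa: "a \<le> x"
    and der: "\<And>y. y \<in> {m * a..m * x} \<Longrightarrow> (f has_real_derivative deriv f y) (at y)"
  shows "(\<lambda>t. (lam - t powr \<theta>) * deriv f (t * (m * x) + m * (1 - t) * a)) integrable_on {0..1}"
    and "m powr (\<theta> - 1) * (x - a) powr \<theta> * ((1 - lam) * f (m * x) + lam * f (m * a))
          - Gamma (\<theta> + 1) / m * RL_left \<theta> f (m * a) (m * x)
        = - (m powr \<theta> * (x - a) powr (\<theta> + 1) *
            integral {0..1} (\<lambda>t. (lam - t powr \<theta>) * deriv f (t * (m * x) + m * (1 - t) * a)))"
proof -
  define u where "u = x - a"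
  define w where "w = m * u"
  define P where "P = m * a"
  have arg: "P + t * w = t * (m * x) + m * (1 - t) * a" for t
    by (simp add: P_def w_def u_def algebra_simps)
  have Pw: "P + w = m * x" by (simp add: P_def w_def u_def algebra_simps)
  have "(\<lambda>t. (lam - t powr \<theta>) * deriv f (t * (m * x) + m * (1 - t) * a)) integrable_on {0..1} \<and>
    m powr (\<theta> - 1) * (x - a) powr \<theta> * ((1 - lam) * f (m * x) + lam * f (m * a))
          - Gamma (\<theta> + 1) / m * RL_left \<theta> f (m * a) (m * x)
        = - (m powr \<theta> * (x - a) powr (\<theta> + 1) *
            integral {0..1} (\<lambda>t. (lam - t powr \<theta>) * deriv f (t * (m * x) + m * (1 - t) * a)))"
  proof (cases "u = 0")
    case True
    hence xa: "x = a" by (simp add: u_def)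
    have "(\<lambda>t. (lam - t powr \<theta>) * deriv f (t * (m * x) + m * (1 - t) * a)) integrable_on {0..1}"
    proof -
      have "(\<lambda>t. (lam - t powr \<theta>) * deriv f (t * (m * x) + m * (1 - t) * a)) = (\<lambda>t. (lam - t powr \<theta>) * deriv f (m * a))"
        by (rule ext) (simp add: xa algebra_simps)
      moreover have "(\<lambda>t. (lam - t powr \<theta>) * deriv f (m * a)) integrable_on {0..1::real}"
        by (intro integrable_continuous_real continuous_on_mult continuous_on_diff continuous_on_const
            continuous_on_powr' continuous_on_id) (use th in auto)
      ultimately show ?thesis by simp
    qed
    moreover have "RL_left \<theta> f (m * a) (m * a) = 0" by (simp add: RL_left_def)
    ultimately show ?thesis using th xa by simp
  next
    case False
    hence u0: "u > 0" using hxa by (simp add: u_def)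
    hence w0: "w > 0" using m0 by (simp add: w_def)
    have der': "(f has_real_derivative deriv f (P + t * w)) (at (P + t * w))" if "t \<in> {0..1}" for t
    proof (rule der)
      have "t * w \<le> w" using that w0 by (simp add: mult_left_le_one_le)
      moreover have "0 \<le> t * w" using that w0 by simp
      ultimately have "P \<le> P + t * w" "P + t * w \<le> m * x" using Pw by linarith+
      thus "P + t * w \<in> {m * a..m * x}" by (simp add: P_def)
    qed
    have wne: "w \<noteq> 0" using w0 by simp
    note sp1 = side_parts(1)[OF th wne der'] and sp2 = side_parts(2)[OF th wne der', where lam=lam]
    define IT where "IT = integral {0..1} (\<lambda>t. t powr (\<theta> - 1) * f (P + t * w))"
    have hI: "((\<lambda>t. (lam - t powr \<theta>) * deriv f (t * (m * x) + m * (1 - t) * a)) has_integral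
           (lam * (f (m * x) - f P) - f (m * x) + \<theta> * IT) / w) {0..1}"
      using sp2 w0 unfolding arg Pw IT_def by simp
    have rl: "((\<lambda>s. ((s - P) / w) powr (\<theta> - 1) * f s) has_integral w * IT) {m * a..m * x}"
    proof -
      have img: "(\<lambda>x. w * x + P) ` {0..1} = {m * a..m * x}"
        using image_affinity_atLeastAtMost[of w P 0 1] w0 Pw by (simp add: P_def add.commute)
      show ?thesis using rl_affine[OF wne sp1] w0 unfolding img IT_def by simp
    qed
    have rl2: "((\<lambda>s. (s - m * a) powr (\<theta> - 1) * f s) has_integral w powr (\<theta> - 1) * (w * IT)) {m * a..m * x}"
    proof (rule has_integral_eq[rotated])
      show "((\<lambda>s. w powr (\<theta> - 1) * (((s - P) / w) powr (\<theta> - 1) * f s)) has_integral w powr (\<theta> - 1) * (w * IT)) {m * a..m * x}"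
        by (rule has_integral_mult_right[OF rl])
      fix s assume "s \<in> {m * a..m * x}"
      hence "s - P \<ge> 0" by (simp add: P_def)
      thus "w powr (\<theta> - 1) * (((s - P) / w) powr (\<theta> - 1) * f s) = (s - m * a) powr (\<theta> - 1) * f s"
        using w0 by (simp add: powr_divide P_def)
    qed
    have RL: "RL_left \<theta> f (m * a) (m * x) = w powr (\<theta> - 1) * (w * IT) / Gamma \<theta>"
      unfolding RL_left_def using rl2 by (simp add: integral_unique)
    define M where "M = m powr \<theta>"
    define U where "U = u powr \<theta>"
    have e1: "m powr (\<theta> - 1) = M / m" using m0 by (simp add: M_def powr_diff)
    have e2: "u powr (\<theta> + 1) = U * u" using u0 by (simp add: U_def powr_add)
    have e3: "w powr (\<theta> - 1) * w = M * U"
      using w0 m0 u0 by (simp add: M_def U_def w_def powr_diff powr_mult)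
    have G: "Gamma (\<theta> + 1) = \<theta> * Gamma \<theta>" "Gamma \<theta> > 0" using th Gamma_succ by auto
    have I: "integral {0..1} (\<lambda>t. (lam - t powr \<theta>) * deriv f (t * (m * x) + m * (1 - t) * a)) =
           (lam * (f (m * x) - f P) - f (m * x) + \<theta> * IT) / w" using hI by (rule integral_unique)
    have "m powr (\<theta> - 1) * (x - a) powr \<theta> * ((1 - lam) * f (m * x) + lam * f (m * a))
          - Gamma (\<theta> + 1) / m * RL_left \<theta> f (m * a) (m * x)
        = - (m powr \<theta> * (x - a) powr (\<theta> + 1) *
            integral {0..1} (\<lambda>t. (lam - t powr \<theta>) * deriv f (t * (m * x) + m * (1 - t) * a)))"
    proof -
      have rr: "w powr (\<theta> - 1) * (w * IT) = M * U * IT" using e3 by (simp add: mult.assoc[symmetric])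
      show ?thesis
        unfolding I RL rr u_def[symmetric] e1 e2 M_def[symmetric] U_def[symmetric] G(1)
        using G(2) m0 u0 by (simp add: w_def P_def field_simps)
    qed
    thus ?thesis using hI by blast
  qed
  thus "(\<lambda>t. (lam - t powr \<theta>) * deriv f (t * (m * x) + m * (1 - t) * a)) integrable_on {0..1}"
    "m powr (\<theta> - 1) * (x - a) powr \<theta> * ((1 - lam) * f (m * x) + lam * f (m * a))
          - Gamma (\<theta> + 1) / m * RL_left \<theta> f (m * a) (m * x)
        = - (m powr \<theta> * (x - a) powr (\<theta> + 1) *
            integral {0..1} (\<lambda>t. (lam - t powr \<theta>) * deriv f (t * (m * x) + m * (1 - t) * a)))"
    by auto
qed

lemma right_part:
  fixes f :: "real \<Rightarrow> real" and \<theta> m a x lam :: real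
  assumes th: "\<theta> > 0" and m0: "m > 0" and hxb: "x \<le> b"
    and der: "\<And>y. y \<in> {m * x..m * b} \<Longrightarrow> (f has_real_derivative deriv f y) (at y)"
  shows "(\<lambda>t. (lam - t powr \<theta>) * deriv f (t * (m * x) + m * (1 - t) * b)) integrable_on {0..1}"
    and "m powr (\<theta> - 1) * (b - x) powr \<theta> * ((1 - lam) * f (m * x) + lam * f (m * b))
          - Gamma (\<theta> + 1) / m * RL_right \<theta> f (m * x) (m * b)
        = (m powr \<theta> * (b - x) powr (\<theta> + 1) *
            integral {0..1} (\<lambda>t. (lam - t powr \<theta>) * deriv f (t * (m * x) + m * (1 - t) * b)))"
proof -
  define u where "u = b - x"
  define w where "w = - (m * u)"
  define P where "P = m * b"
  have arg: "P + t * w = t * (m * x) + m * (1 - t) * b" for t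
    by (simp add: P_def w_def u_def algebra_simps)
  have Pw: "P + w = m * x" by (simp add: P_def w_def u_def algebra_simps)
  have "(\<lambda>t. (lam - t powr \<theta>) * deriv f (t * (m * x) + m * (1 - t) * b)) integrable_on {0..1} \<and>
    m powr (\<theta> - 1) * (b - x) powr \<theta> * ((1 - lam) * f (m * x) + lam * f (m * b))
          - Gamma (\<theta> + 1) / m * RL_right \<theta> f (m * x) (m * b)
        = (m powr \<theta> * (b - x) powr (\<theta> + 1) *
            integral {0..1} (\<lambda>t. (lam - t powr \<theta>) * deriv f (t * (m * x) + m * (1 - t) * b)))"
  proof (cases "u = 0")
    case True
    hence xa: "b = x" by (simp add: u_def)
    have "(\<lambda>t. (lam - t powr \<theta>) * deriv f (t * (m * x) + m * (1 - t) * b)) integrable_on {0..1}"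
    proof -
      have "(\<lambda>t. (lam - t powr \<theta>) * deriv f (t * (m * x) + m * (1 - t) * b)) = (\<lambda>t. (lam - t powr \<theta>) * deriv f (m * b))"
        by (rule ext) (simp add: xa[symmetric] algebra_simps)
      moreover have "(\<lambda>t. (lam - t powr \<theta>) * deriv f (m * b)) integrable_on {0..1::real}"
        by (intro integrable_continuous_real continuous_on_mult continuous_on_diff continuous_on_const
            continuous_on_powr' continuous_on_id) (use th in auto)
      ultimately show ?thesis by simp
    qed
    moreover have "RL_right \<theta> f (m * b) (m * b) = 0" by (simp add: RL_right_def)
    ultimately show ?thesis using th xa[symmetric] by simp
  next
    case False
    hence u0: "u > 0" using hxb by (simp add: u_def)
    hence w0: "w < 0" using m0 by (simp add: w_def)
    define r where "r = m * u"
    have r0: "r > 0" using u0 m0 by (simp add: r_def)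
    have wr: "w = - r" by (simp add: w_def r_def)
    have der': "(f has_real_derivative deriv f (P + t * w)) (at (P + t * w))" if "t \<in> {0..1}" for t
    proof (rule der)
      have "t * r \<le> r" using that r0 by (simp add: mult_left_le_one_le)
      moreover have "0 \<le> t * r" using that r0 by simp
      moreover have "t * w = - (t * r)" by (simp add: wr)
      ultimately have "m * x \<le> P + t * w" "P + t * w \<le> P" using Pw wr \<open>t * w = - (t * r)\<close> by linarith+
      thus "P + t * w \<in> {m * x..m * b}" by (simp add: P_def)
    qed
    have wne: "w \<noteq> 0" using w0 by simp
    note sp1 = side_parts(1)[OF th wne der'] and sp2 = side_parts(2)[OF th wne der', where lam=lam]
    define IT where "IT = integral {0..1} (\<lambda>t. t powr (\<theta> - 1) * f (P + t * w))"
    have hI: "((\<lambda>t. (lam - t powr \<theta>) * deriv f (t * (m * x) + m * (1 - t) * b)) has_integral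
           (lam * (f (m * x) - f P) - f (m * x) + \<theta> * IT) / w) {0..1}"
      using sp2 w0 unfolding arg Pw IT_def by simp
    have rl: "((\<lambda>s. ((s - P) / w) powr (\<theta> - 1) * f s) has_integral r * IT) {m * x..m * b}"
    proof -
      have img: "(\<lambda>x. w * x + P) ` {0..1} = {m * x..m * b}"
        using image_affinity_atLeastAtMost[of w P 0 1] w0 Pw by (simp add: P_def add.commute)
      show ?thesis using rl_affine[OF wne sp1] w0 wr unfolding img IT_def by simp
    qed
    have rl2: "((\<lambda>s. (m * b - s) powr (\<theta> - 1) * f s) has_integral r powr (\<theta> - 1) * (r * IT)) {m * x..m * b}"
    proof (rule has_integral_eq[rotated])
      show "((\<lambda>s. r powr (\<theta> - 1) * (((s - P) / w) powr (\<theta> - 1) * f s)) has_integral r powr (\<theta> - 1) * (r * IT)) {m * x..m * b}"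
        by (rule has_integral_mult_right[OF rl])
      fix s assume "s \<in> {m * x..m * b}"
      hence "P - s \<ge> 0" by (simp add: P_def)
      moreover have "(s - P) / w = (P - s) / r" using r0 by (simp add: wr field_simps)
      ultimately show "r powr (\<theta> - 1) * (((s - P) / w) powr (\<theta> - 1) * f s) = (m * b - s) powr (\<theta> - 1) * f s"
        using r0 by (simp add: powr_divide P_def)
    qed
    have RL: "RL_right \<theta> f (m * x) (m * b) = r powr (\<theta> - 1) * (r * IT) / Gamma \<theta>"
      unfolding RL_right_def using rl2 by (simp add: integral_unique)
    define M where "M = m powr \<theta>"
    define U where "U = u powr \<theta>"
    have e1: "m powr (\<theta> - 1) = M / m" using m0 by (simp add: M_def powr_diff)
    have e2: "u powr (\<theta> + 1) = U * u" using u0 by (simp add: U_def powr_add)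
    have e3: "r powr (\<theta> - 1) * r = M * U"
      using r0 m0 u0 by (simp add: M_def U_def r_def powr_diff powr_mult)
    have G: "Gamma (\<theta> + 1) = \<theta> * Gamma \<theta>" "Gamma \<theta> > 0" using th Gamma_succ by auto
    have I: "integral {0..1} (\<lambda>t. (lam - t powr \<theta>) * deriv f (t * (m * x) + m * (1 - t) * b)) =
           (lam * (f (m * x) - f P) - f (m * x) + \<theta> * IT) / w" using hI by (rule integral_unique)
    have "m powr (\<theta> - 1) * (b - x) powr \<theta> * ((1 - lam) * f (m * x) + lam * f (m * b))
          - Gamma (\<theta> + 1) / m * RL_right \<theta> f (m * x) (m * b)
        = (m powr \<theta> * (b - x) powr (\<theta> + 1) *
            integral {0..1} (\<lambda>t. (lam - t powr \<theta>) * deriv f (t * (m * x) + m * (1 - t) * b)))"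
    proof -
      have rr: "r powr (\<theta> - 1) * (r * IT) = M * U * IT" using e3 by (simp add: mult.assoc[symmetric])
      show ?thesis
        unfolding I RL rr u_def[symmetric] e1 e2 M_def[symmetric] U_def[symmetric] G(1) wr
        using G(2) m0 u0 by (simp add: r_def P_def field_simps)
    qed
    thus ?thesis using hI by blast
  qed
  thus "(\<lambda>t. (lam - t powr \<theta>) * deriv f (t * (m * x) + m * (1 - t) * b)) integrable_on {0..1}"
    "m powr (\<theta> - 1) * (b - x) powr \<theta> * ((1 - lam) * f (m * x) + lam * f (m * b))
          - Gamma (\<theta> + 1) / m * RL_right \<theta> f (m * x) (m * b)
        = (m powr \<theta> * (b - x) powr (\<theta> + 1) *
            integral {0..1} (\<lambda>t. (lam - t powr \<theta>) * deriv f (t * (m * x) + m * (1 - t) * b)))"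
    by auto
qed



lemma S_alg:
  fixes K U V D G RL RR F Fa Fb lam m :: real
  assumes "D \<noteq> 0" "m \<noteq> 0"
  shows "(1 - lam) * K * ((U + V) / D) * F + lam * K * ((U * Fa + V * Fb) / D) - G / (m * D) * (RL + RR)
    = ((K * U * ((1 - lam) * F + lam * Fa) - G / m * RL) + (K * V * ((1 - lam) * F + lam * Fb) - G / m * RR)) / D"
  using assms by (simp add: field_simps)

theorem theorem2p4:
  fixes f :: "real \<Rightarrow> real" and I :: "real set"
    and m \<alpha> a b q p x lam \<theta> :: real
  assumes hq: "q > 1" and hp: "p = q / (q - 1)"
    and I_int: "is_interval I" and I_nonneg: "I \<subseteq> {0..}"
    and f_diff: "\<forall>y\<in>interior I. f differentiable (at y)"
    and hm: "m \<in> {0<..1}" and h\<alpha>: "\<alpha> \<in> {0..1}"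
    and hab: "a < b" and hma: "m * a \<in> interior I" and hb: "b \<in> interior I"
    and f'_int: "set_integrable lborel {m * a..m * b} (deriv f)"
    and conv: "alpha_m_convex_on \<alpha> m {m * a..b} (\<lambda>s. \<bar>deriv f s\<bar> powr q)"
    and hx: "x \<in> {a..b}" and hlam: "lam \<in> {0..1}" and h\<theta>: "\<theta> > 0"
  shows "\<bar>S_f f m x lam \<theta> a b\<bar>
    \<le> m powr \<theta> * A4 \<theta> lam p powr (1 / p) / (b - a) *
       ((x - a) powr (\<theta> + 1) *
          ((\<bar>deriv f (m * x)\<bar> powr q + \<alpha> * m * \<bar>deriv f a\<bar> powr q) / (\<alpha> + 1)) powr (1 / q)
      + (b - x) powr (\<theta> + 1) *
          ((\<bar>deriv f (m * x)\<bar> powr q + \<alpha> * m * \<bar>deriv f b\<bar> powr q) / (\<alpha> + 1)) powr (1 / q))"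
proof -
  have m0: "m > 0" and m1: "m \<le> 1" using hm by auto
  have a0: "0 \<le> \<alpha>" and a1: "\<alpha> \<le> 1" using h\<alpha> by auto
  have l0: "0 \<le> lam" and l1: "lam \<le> 1" using hlam by auto
  have hxa: "a \<le> x" and hxb: "x \<le> b" using hx by auto
  have "m * a \<ge> 0" using hma interior_subset I_nonneg by fastforce
  hence ha: "a \<ge> 0" using m0 by (simp add: zero_le_mult_iff)
  have mab: "m * a \<le> b" using mult_left_le_one_le[of a m] m0 m1 ha hab by simp
  have sub: "{m * a..b} \<subseteq> interior I"
  proof -
    have "convex (interior I)" by (rule convex_interior[OF is_interval_convex[OF I_int]])
    hence "closed_segment (m * a) b \<subseteq> interior I"
      using hma hb by (simp add: convex_contains_segment)
    thus ?thesis using mab by (simp add: closed_segment_eq_real_ivl)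
  qed
  have der: "(f has_real_derivative deriv f y) (at y)" if "y \<in> {m * a..b}" for y
    using f_diff sub that DERIV_deriv_iff_real_differentiable by blast
  have mx: "m * x \<le> b" using mult_left_le_one_le[of x m] m0 m1 ha hxa hxb by simp
  have mb: "m * b \<le> b" using mult_left_le_one_le[of b m] m0 m1 ha hab by simp
  have max: "m * a \<le> m * x" using m0 hxa by simp
  have mxb: "m * x \<le> m * b" using m0 hxb by simp
  have derL: "(f has_real_derivative deriv f y) (at y)" if "y \<in> {m * a..m * x}" for y
    using der that mx by auto
  have derR: "(f has_real_derivative deriv f y) (at y)" if "y \<in> {m * x..m * b}" for y
    using der that mb max by auto
  define I1 where "I1 = integral {0..1} (\<lambda>t. (lam - t powr \<theta>) * deriv f (t * (m * x) + m * (1 - t) * a))"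
  define I2 where "I2 = integral {0..1} (\<lambda>t. (lam - t powr \<theta>) * deriv f (t * (m * x) + m * (1 - t) * b))"
  note L = left_part[OF h\<theta> m0 hxa derL, where lam=lam]
  note R = right_part[OF h\<theta> m0 hxb derR, where lam=lam]
  define Lft where "Lft = m powr (\<theta> - 1) * (x - a) powr \<theta> * ((1 - lam) * f (m * x) + lam * f (m * a))
          - Gamma (\<theta> + 1) / m * RL_left \<theta> f (m * a) (m * x)"
  define Rgt where "Rgt = m powr (\<theta> - 1) * (b - x) powr \<theta> * ((1 - lam) * f (m * x) + lam * f (m * b))
          - Gamma (\<theta> + 1) / m * RL_right \<theta> f (m * x) (m * b)"
  have SE: "S_f f m x lam \<theta> a b = (Lft + Rgt) / (b - a)"
    using hab m0 unfolding S_f_def Lft_def Rgt_def by (subst S_alg) auto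
  have SE2: "S_f f m x lam \<theta> a b = m powr \<theta> / (b - a) * ((b - x) powr (\<theta> + 1) * I2 - (x - a) powr (\<theta> + 1) * I1)"
  proof -
    have "Lft = - (m powr \<theta> * (x - a) powr (\<theta> + 1) * I1)" unfolding Lft_def I1_def by (rule L(2))
    moreover have "Rgt = m powr \<theta> * (b - x) powr (\<theta> + 1) * I2" unfolding Rgt_def I2_def by (rule R(2))
    ultimately show ?thesis unfolding SE by (simp add: field_simps)
  qed
  define B1 where "B1 = ((\<bar>deriv f (m * x)\<bar> powr q + \<alpha> * m * \<bar>deriv f a\<bar> powr q) / (\<alpha> + 1)) powr (1 / q)"
  define B2 where "B2 = ((\<bar>deriv f (m * x)\<bar> powr q + \<alpha> * m * \<bar>deriv f b\<bar> powr q) / (\<alpha> + 1)) powr (1 / q)"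
  define A where "A = A4 \<theta> lam p powr (1 / p)"
  have b1: "\<bar>I1\<bar> \<le> A * B1" unfolding I1_def A_def B1_def
    by (rule side_bound[OF hq hp h\<theta> l0 l1 a0 a1 m0 m1 ha hxa hxb order_refl hab[THEN less_imp_le] conv L(1)])
  have b2: "\<bar>I2\<bar> \<le> A * B2" unfolding I2_def A_def B2_def
    by (rule side_bound[OF hq hp h\<theta> l0 l1 a0 a1 m0 m1 ha hxa hxb hab[THEN less_imp_le] order_refl conv R(1)])
  have Mp: "m powr \<theta> / (b - a) \<ge> 0" using hab by simp
  have u1: "(x - a) powr (\<theta> + 1) \<ge> 0" and v1: "(b - x) powr (\<theta> + 1) \<ge> 0" by simp_all
  have "\<bar>(b - x) powr (\<theta> + 1) * I2 - (x - a) powr (\<theta> + 1) * I1\<bar>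
        \<le> (b - x) powr (\<theta> + 1) * \<bar>I2\<bar> + (x - a) powr (\<theta> + 1) * \<bar>I1\<bar>"
    using u1 v1 by (simp add: abs_mult abs_triangle_ineq4[THEN order_trans])
  also have "\<dots> \<le> (b - x) powr (\<theta> + 1) * (A * B2) + (x - a) powr (\<theta> + 1) * (A * B1)"
    using b1 b2 u1 v1 by (intro add_mono mult_left_mono) auto
  finally have H: "\<bar>(b - x) powr (\<theta> + 1) * I2 - (x - a) powr (\<theta> + 1) * I1\<bar>
     \<le> (b - x) powr (\<theta> + 1) * (A * B2) + (x - a) powr (\<theta> + 1) * (A * B1)" .
  have "\<bar>S_f f m x lam \<theta> a b\<bar> = m powr \<theta> / (b - a) * \<bar>(b - x) powr (\<theta> + 1) * I2 - (x - a) powr (\<theta> + 1) * I1\<bar>"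
    unfolding SE2 abs_mult using Mp hab by simp
  also have "\<dots> \<le> m powr \<theta> / (b - a) * ((b - x) powr (\<theta> + 1) * (A * B2) + (x - a) powr (\<theta> + 1) * (A * B1))"
    by (rule mult_left_mono[OF H Mp])
  finally have "\<bar>S_f f m x lam \<theta> a b\<bar> \<le> m powr \<theta> / (b - a) * ((b - x) powr (\<theta> + 1) * (A * B2) + (x - a) powr (\<theta> + 1) * (A * B1))" .
  thus ?thesis unfolding A_def B1_def B2_def by (simp add: algebra_simps)
qed

end
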